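(* Let $G=(V,E,w)$ be any weighted undirected graph, $\beta\in(0,1)$, and $\mathcal T$ a $\beta$-balanced HC-tree of $G$. Define $$W(G):=\sum_{\substack{\text{internal nodes } u \text{ of } \mathcal T\\ (A,B):=\mathrm{cut}(\mathcal T[u])}}\frac12\big(w(A,\bar A)+w(B,\bar B)\big)\cdot|A\cup B|.$$ Then $C_G(\mathcal T)\le W(G)\le \frac1\beta\, C_G(\mathcal T)$.
   Context: Let $G=(V,E,w)$ be an undirected graph with nonnegative edge weights $w$. A hierarchical clustering tree (HC-tree) of $G$ is a rooted tree $\mathcal T$ whose leaves are in bijection with $V$. For a node $z$, $\mathcal T[z]$ is the subtree rooted at $z$ and $\mathrm{leaves}(\mathcal T[z])\subseteq V$ its set of leaves. For $u,v\in V$, $u\vee v$ denotes their lowest common ancestor in $\mathcal T$. The cost of $\mathcal T$ on $G$ is $C_G(\mathcal T)=\sum_{(u,v)\in E} w(u,v)\,|\mathrm{leaves}(\mathcal T[u\vee v])|$. For disjoint $A,B\subseteq V$, $w(A,B)$ denotes the total weight of edges with one endpoint in $A$ and the other in $B$, and $\bar A=V\setminus A$. If $\mathcal T$ is binary and $z$ is an internal node with children $z_1,z_2$, where $|\mathrm{leaves}(\mathcal T[z_1])|\le|\mathrm{leaves}(\mathcal T[z_2])|$, then $\mathrm{cut}(\mathcal T[z]):=(A,B)$ with $A=\mathrm{leaves}(\mathcal T[z_1])$, $B=\mathrm{leaves}(\mathcal T[z_2])$. For $0<\beta<1$, a pair of disjoint sets $(A,B)$ is $\beta$-balanced if $\max\{|A|,|B|\}\le(1-\beta)|A\cup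 B|$; a binary HC-tree is $\beta$-balanced if $\mathrm{cut}(\mathcal T[z])$ is $\beta$-balanced for every internal node $z$. *)

theory Defs
  imports Complex_Main
begin

datatype 'a hctree = Leaf 'a | Node "'a hctree" "'a hctree"

fun leaves_list :: "'a hctree \<Rightarrow> 'a list" where
  "leaves_list (Leaf v) = [v]"
| "leaves_list (Node l r) = leaves_list l @ leaves_list r"

definition leaves :: "'a hctree \<Rightarrow> 'a set" where
  "leaves T = set (leaves_list T)"

definition is_hctree :: "'a set \<Rightarrow> 'a hctree \<Rightarrow> bool" where
  "is_hctree V T \<longleftrightarrow> distinct (leaves_list T) \<and> leaves T = V"

definition wgraph :: "'a set \<Rightarrow> 'a set set \<Rightarrow> ('a set \<Rightarrow> real) \<Rightarrow> bool" where
  "wgraph V E w \<longleftrightarrow> finite V \<and> (\<forall>e\<in>E. e \<subseteq> V \<and> card e = 2) \<and> (\<forall>e\<in>E. w e \<ge> 0)"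

fun lca_size :: "'a hctree \<Rightarrow> 'a set \<Rightarrow> nat" where
  "lca_size (Leaf v) e = 1"
| "lca_size (Node l r) e =
     (if e \<subseteq> leaves l then lca_size l e
      else if e \<subseteq> leaves r then lca_size r e
      else card (leaves (Node l r)))"

definition hc_cost :: "'a set set \<Rightarrow> ('a set \<Rightarrow> real) \<Rightarrow> 'a hctree \<Rightarrow> real" where
  "hc_cost E w T = (\<Sum>e\<in>E. w e * real (lca_size T e))"

definition wcut :: "'a set set \<Rightarrow> ('a set \<Rightarrow> real) \<Rightarrow> 'a set \<Rightarrow> 'a set \<Rightarrow> real" where
  "wcut E w A B = (\<Sum>e\<in>{e\<in>E. e \<inter> A \<noteq> {} \<and> e \<inter> B \<noteq> {}}. w e)"

definition cut_of :: "'a hctree \<Rightarrow> 'a hctree \<Rightarrow> 'a set \<times> 'a set" where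
  "cut_of l r = (if card (leaves l) \<le> card (leaves r) then (leaves l, leaves r)
                 else (leaves r, leaves l))"

definition balanced_pair :: "real \<Rightarrow> 'a set \<times> 'a set \<Rightarrow> bool" where
  "balanced_pair \<beta> AB = (case AB of (A, B) \<Rightarrow>
     real (max (card A) (card B)) \<le> (1 - \<beta>) * real (card (A \<union> B)))"

fun beta_balanced :: "real \<Rightarrow> 'a hctree \<Rightarrow> bool" where
  "beta_balanced \<beta> (Leaf v) = True"
| "beta_balanced \<beta> (Node l r) =
     (balanced_pair \<beta> (cut_of l r) \<and> beta_balanced \<beta> l \<and> beta_balanced \<beta> r)"

fun Wsum :: "'a set \<Rightarrow> 'a set set \<Rightarrow> ('a set \<Rightarrow> real) \<Rightarrow> 'a hctree \<Rightarrow> real" where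
  "Wsum V E w (Leaf v) = 0"
| "Wsum V E w (Node l r) =
     (case cut_of l r of (A, B) \<Rightarrow>
        (1/2) * (wcut E w A (V - A) + wcut E w B (V - B)) * real (card (A \<union> B)))
     + Wsum V E w l + Wsum V E w r"

end

theory Submission
  imports Defs
begin

definition sp :: "'a set \<Rightarrow> 'a set \<Rightarrow> 'a set \<Rightarrow> real" where
  "sp V A e = (if e \<inter> A \<noteq> {} \<and> e \<inter> (V - A) \<noteq> {} then 1 else 0)"

fun g :: "'a set \<Rightarrow> 'a hctree \<Rightarrow> 'a set \<Rightarrow> real" where
  "g V (Leaf v) e = 0"
| "g V (Node l r) e = (1/2) * (sp V (leaves l) e + sp V (leaves r) e)
      * real (card (leaves l \<union> leaves r)) + g V l e + g V r e"

lemma wcut_sp: "finite E \<Longrightarrow> wcut E w A (V - A) = (\<Sum>e\<in>E. w e * sp V A e)"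
  unfolding wcut_def sp_def by (simp add: sum.inter_filter[symmetric] if_distrib cong: if_cong)

lemma leaves_Node[simp]: "leaves (Node l r) = leaves l \<union> leaves r"
  by (simp add: leaves_def)

lemma leaves_Leaf[simp]: "leaves (Leaf v) = {v}"
  by (simp add: leaves_def)

lemma finite_leaves[simp]: "finite (leaves T)"
  by (simp add: leaves_def)

lemma Wsum_eq: "finite E \<Longrightarrow> Wsum V E w T = (\<Sum>e\<in>E. w e * g V T e)"
proof (induction T)
  case (Leaf x)
  then show ?case by simp
next
  case (Node l r)
  have c: "(case cut_of l r of (A, B) \<Rightarrow>
        (1/2) * (wcut E w A (V - A) + wcut E w B (V - B)) * real (card (A \<union> B)))
     = (\<Sum>e\<in>E. w e * ((1/2) * (sp V (leaves l) e + sp V (leaves r) e)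
      * real (card (leaves l \<union> leaves r))))"
    using Node.prems
    by (auto simp: cut_of_def wcut_sp sum_distrib_left sum_distrib_right sum.distrib[symmetric]
        algebra_simps Un_commute)
  show ?case using Node c by (simp add: sum.distrib algebra_simps)
qed

lemma g_nonneg: "g V T e \<ge> 0"
  by (induction T) (auto simp: sp_def)

lemma g_zero: "x \<notin> leaves T \<Longrightarrow> y \<notin> leaves T \<Longrightarrow> g V T {x, y} = 0"
  by (induction T) (auto simp: sp_def)

lemma bal: "balanced_pair \<beta> (cut_of l r) \<Longrightarrow>
    real (card (leaves l)) \<le> (1 - \<beta>) * real (card (leaves l \<union> leaves r)) \<and>
    real (card (leaves r)) \<le> (1 - \<beta>) * real (card (leaves l \<union> leaves r))"
  unfolding balanced_pair_def cut_of_def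
  by (auto split: if_splits simp: Un_commute max_def)

lemma dist_Node: "distinct (leaves_list (Node l r)) \<Longrightarrow>
   distinct (leaves_list l) \<and> distinct (leaves_list r) \<and> leaves l \<inter> leaves r = {}"
  by (simp add: leaves_def)

lemma hb: "distinct (leaves_list T) \<Longrightarrow> beta_balanced \<beta> T \<Longrightarrow> 0 < \<beta> \<Longrightarrow> \<beta> < 1 \<Longrightarrow>
   x \<in> leaves T \<Longrightarrow> y \<notin> leaves T \<Longrightarrow> y \<in> V \<Longrightarrow>
   g V T {x, y} \<le> real (card (leaves T)) / (2 * \<beta>)"
proof (induction T)
  case (Leaf v)
  then show ?case by simp
next
  case (Node l r)
  from dist_Node[OF Node.prems(1)] have dl: "distinct (leaves_list l)" and dr: "distinct (leaves_list r)"
    and disj: "leaves l \<inter> leaves r = {}" by auto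
  have bl: "beta_balanced \<beta> l" "beta_balanced \<beta> r" "balanced_pair \<beta> (cut_of l r)"
    using Node.prems(2) by auto
  note B = bal[OF bl(3)]
  let ?L = "real (card (leaves l \<union> leaves r))"
  show ?case
  proof (cases "x \<in> leaves l")
    case True
    then have xr: "x \<notin> leaves r" using disj by auto
    have yl: "y \<notin> leaves l" "y \<notin> leaves r" using Node.prems(6) by auto
    have s: "sp V (leaves l) {x,y} = 1" "sp V (leaves r) {x,y} = 0"
      using True xr yl Node.prems(7) by (auto simp: sp_def)
    have gr: "g V r {x,y} = 0" using g_zero[OF xr yl(2)] .
    have gl: "g V l {x,y} \<le> real (card (leaves l)) / (2 * \<beta>)"
      using Node.IH(1)[OF dl bl(1) Node.prems(3,4) True yl(1) Node.prems(7)] .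
    also have "\<dots> \<le> (1 - \<beta>) * ?L / (2 * \<beta>)"
      using B Node.prems(3) by (simp add: divide_right_mono)
    finally have "g V (Node l r) {x,y} \<le> ?L / 2 + (1 - \<beta>) * ?L / (2 * \<beta>)"
      using s gr by simp
    also have "\<dots> = ?L / (2 * \<beta>)" using Node.prems(3) by (simp add: field_simps)
    finally show ?thesis by simp
  next
    case False
    then have xr: "x \<in> leaves r" using Node.prems(5) by auto
    have yl: "y \<notin> leaves l" "y \<notin> leaves r" using Node.prems(6) by auto
    have s: "sp V (leaves l) {x,y} = 0" "sp V (leaves r) {x,y} = 1"
      using False xr yl Node.prems(7) by (auto simp: sp_def)
    have gr: "g V l {x,y} = 0" using g_zero[OF False yl(1)] .
    have gl: "g V r {x,y} \<le> real (card (leaves r)) / (2 * \<beta>)"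
      using Node.IH(2)[OF dr bl(2) Node.prems(3,4) xr yl(2) Node.prems(7)] .
    also have "\<dots> \<le> (1 - \<beta>) * ?L / (2 * \<beta>)"
      using B Node.prems(3) by (simp add: divide_right_mono)
    finally have "g V (Node l r) {x,y} \<le> ?L / 2 + (1 - \<beta>) * ?L / (2 * \<beta>)"
      using s gr by simp
    also have "\<dots> = ?L / (2 * \<beta>)" using Node.prems(3) by (simp add: field_simps)
    finally show ?thesis by simp
  qed
qed

lemma ha: "distinct (leaves_list T) \<Longrightarrow> beta_balanced \<beta> T \<Longrightarrow> 0 < \<beta> \<Longrightarrow> \<beta> < 1 \<Longrightarrow>
   x \<noteq> y \<Longrightarrow> x \<in> leaves T \<Longrightarrow> y \<in> leaves T \<Longrightarrow> x \<in> V \<Longrightarrow> y \<in> V \<Longrightarrow>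
   real (lca_size T {x, y}) \<le> g V T {x, y} \<and> g V T {x, y} \<le> real (lca_size T {x, y}) / \<beta>"
proof (induction T)
  case (Leaf v)
  then show ?case by simp
next
  case (Node l r)
  from dist_Node[OF Node.prems(1)] have dl: "distinct (leaves_list l)" and dr: "distinct (leaves_list r)"
    and disj: "leaves l \<inter> leaves r = {}" by auto
  have bl: "beta_balanced \<beta> l" "beta_balanced \<beta> r" "balanced_pair \<beta> (cut_of l r)"
    using Node.prems(2) by auto
  note B = bal[OF bl(3)]
  let ?L = "real (card (leaves l \<union> leaves r))"
  consider (ll) "x \<in> leaves l" "y \<in> leaves l" | (rr) "x \<in> leaves r" "y \<in> leaves r"
    | (lr) "x \<in> leaves l" "y \<in> leaves r" | (rl) "x \<in> leaves r" "y \<in> leaves l"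
    using Node.prems(6,7) by auto
  then show ?case
  proof cases
    case ll
    then have "x \<notin> leaves r" "y \<notin> leaves r" using disj by auto
    then have "g V r {x,y} = 0" "sp V (leaves l) {x,y} = 0" "sp V (leaves r) {x,y} = 0"
      using ll g_zero by (auto simp: sp_def)
    moreover have "lca_size (Node l r) {x,y} = lca_size l {x,y}" using ll by simp
    ultimately show ?thesis using Node.IH(1)[OF dl bl(1) Node.prems(3,4,5) ll Node.prems(8,9)]
      by simp
  next
    case rr
    then have nl: "x \<notin> leaves l" "y \<notin> leaves l" using disj by auto
    then have "g V l {x,y} = 0" "sp V (leaves l) {x,y} = 0" "sp V (leaves r) {x,y} = 0"
      using rr g_zero by (auto simp: sp_def)
    moreover have "lca_size (Node l r) {x,y} = lca_size r {x,y}" using rr nl by auto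
    ultimately show ?thesis using Node.IH(2)[OF dr bl(2) Node.prems(3,4,5) rr Node.prems(8,9)]
      by simp
  next
    case lr
    then have nl: "y \<notin> leaves l" "x \<notin> leaves r" using disj by auto
    have s: "sp V (leaves l) {x,y} = 1" "sp V (leaves r) {x,y} = 1"
      using lr nl Node.prems(8,9) by (auto simp: sp_def)
    have lc: "lca_size (Node l r) {x,y} = card (leaves l \<union> leaves r)" using nl by auto
    have h1: "g V l {x,y} \<le> real (card (leaves l)) / (2 * \<beta>)"
      using hb[OF dl bl(1) Node.prems(3,4) lr(1) nl(1) Node.prems(9)] .
    have h2: "g V r {y,x} \<le> real (card (leaves r)) / (2 * \<beta>)"
      using hb[OF dr bl(2) Node.prems(3,4) lr(2) nl(2) Node.prems(8)] .
    have e: "{y,x} = {x,y}" by auto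
    have "real (card (leaves l)) / (2 * \<beta>) \<le> (1 - \<beta>) * ?L / (2 * \<beta>)"
      "real (card (leaves r)) / (2 * \<beta>) \<le> (1 - \<beta>) * ?L / (2 * \<beta>)"
      using B Node.prems(3) by (simp_all add: divide_right_mono)
    then have "g V (Node l r) {x,y} \<le> ?L + 2 * ((1 - \<beta>) * ?L / (2 * \<beta>))"
      using s h1 h2 e by simp
    also have "\<dots> = ?L / \<beta>" using Node.prems(3) by (simp add: field_simps)
    finally show ?thesis using lc s g_nonneg[of V l "{x,y}"] g_nonneg[of V r "{x,y}"] by simp
  next
    case rl
    then have nl: "x \<notin> leaves l" "y \<notin> leaves r" using disj by auto
    have s: "sp V (leaves l) {x,y} = 1" "sp V (leaves r) {x,y} = 1"
      using rl nl Node.prems(8,9) by (auto simp: sp_def)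
    have lc: "lca_size (Node l r) {x,y} = card (leaves l \<union> leaves r)" using nl by auto
    have h1: "g V l {y,x} \<le> real (card (leaves l)) / (2 * \<beta>)"
      using hb[OF dl bl(1) Node.prems(3,4) rl(2) nl(1) Node.prems(8)] .
    have h2: "g V r {x,y} \<le> real (card (leaves r)) / (2 * \<beta>)"
      using hb[OF dr bl(2) Node.prems(3,4) rl(1) nl(2) Node.prems(9)] .
    have e: "{y,x} = {x,y}" by auto
    have "real (card (leaves l)) / (2 * \<beta>) \<le> (1 - \<beta>) * ?L / (2 * \<beta>)"
      "real (card (leaves r)) / (2 * \<beta>) \<le> (1 - \<beta>) * ?L / (2 * \<beta>)"
      using B Node.prems(3) by (simp_all add: divide_right_mono)
    then have "g V (Node l r) {x,y} \<le> ?L + 2 * ((1 - \<beta>) * ?L / (2 * \<beta>))"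
      using s h1 h2 e by simp
    also have "\<dots> = ?L / \<beta>" using Node.prems(3) by (simp add: field_simps)
    finally show ?thesis using lc s g_nonneg[of V l "{x,y}"] g_nonneg[of V r "{x,y}"] by simp
  qed
qed

theorem lemma3p2:
  fixes V :: "'a set" and E :: "'a set set" and w :: "'a set \<Rightarrow> real"
    and \<beta> :: real and T :: "'a hctree"
  assumes "wgraph V E w"
    and "0 < \<beta>" and "\<beta> < 1"
    and "is_hctree V T"
    and "beta_balanced \<beta> T"
  shows "hc_cost E w T \<le> Wsum V E w T \<and> Wsum V E w T \<le> (1 / \<beta>) * hc_cost E w T"
proof -
  have fV: "finite V" and eV: "\<And>e. e \<in> E \<Longrightarrow> e \<subseteq> V \<and> card e = 2"
    and wp: "\<And>e. e \<in> E \<Longrightarrow> w e \<ge> 0" using assms(1) by (auto simp: wgraph_def)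
  have fE: "finite E"
    by (rule finite_subset[of E "Pow V"]) (use eV fV in auto)
  have dT: "distinct (leaves_list T)" and lT: "leaves T = V" using assms(4) by (auto simp: is_hctree_def)
  have key: "real (lca_size T e) \<le> g V T e \<and> g V T e \<le> real (lca_size T e) / \<beta>" if eE: "e \<in> E" for e
  proof -
    obtain x y where "e = {x,y}" "x \<noteq> y" using eV[OF eE] by (auto simp: card_2_iff)
    moreover have "x \<in> V" "y \<in> V" using eV[OF eE] calculation(1) by auto
    ultimately show ?thesis using ha[OF dT assms(5,2,3)] lT by auto
  qed
  have W: "Wsum V E w T = (\<Sum>e\<in>E. w e * g V T e)" using Wsum_eq[OF fE] .
  have 1: "hc_cost E w T \<le> Wsum V E w T" unfolding W hc_cost_def
    by (rule sum_mono) (use key wp in \<open>auto intro: mult_left_mono\<close>)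
  have "Wsum V E w T \<le> (\<Sum>e\<in>E. w e * (real (lca_size T e) / \<beta>))" unfolding W
  proof (rule sum_mono)
    fix e assume "e \<in> E"
    then show "w e * g V T e \<le> w e * (real (lca_size T e) / \<beta>)"
      using key wp by (intro mult_left_mono) auto
  qed
  also have "\<dots> = (1 / \<beta>) * hc_cost E w T" by (simp add: hc_cost_def sum_distrib_left)
  finally show ?thesis using 1 by simp
qed

end
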